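(* Let $(a_n)_{n\ge 0}$ and $(b_n)_{n\ge 0}$ be two sequences of nonnegative real numbers, and let $\alpha_0,\beta\in(0,1)$ be such that for every $\alpha\in(0,\alpha_0)$ the inequality $$a_{n+1}+b_{n+1}\le (1-2\alpha)a_n+\alpha a_{n-1}+\beta b_n$$ holds for all $n\ge 1$. Then there exist $\gamma\in(0,1)$ and $M>0$ such that $a_n\le \gamma^n M$ for every $n>0$. *)

theory Defs
  imports Complex_Main
begin

end

theory Submission
  imports Defs
begin

theorem lemma2p8:
  fixes a b :: "nat \<Rightarrow> real" and \<alpha>\<^sub>0 \<beta> :: real
  assumes a_nonneg: "\<And>n. a n \<ge> 0"
    and b_nonneg: "\<And>n. b n \<ge> 0"
    and alpha0: "0 < \<alpha>\<^sub>0" "\<alpha>\<^sub>0 < 1"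
    and beta: "0 < \<beta>" "\<beta> < 1"
    and rec: "\<And>\<alpha> n. 0 < \<alpha> \<Longrightarrow> \<alpha> < \<alpha>\<^sub>0 \<Longrightarrow> n \<ge> 1 \<Longrightarrow>
               a (n + 1) + b (n + 1) \<le> (1 - 2 * \<alpha>) * a n + \<alpha> * a (n - 1) + \<beta> * b n"
  shows "\<exists>\<gamma> M. 0 < \<gamma> \<and> \<gamma> < 1 \<and> M > 0 \<and> (\<forall>n>0. a n \<le> \<gamma> ^ n * M)"
proof -
  define al where "al = \<alpha>\<^sub>0 / 2"
  have al: "0 < al" "al < \<alpha>\<^sub>0" "al < 1/2" using alpha0 by (auto simp: al_def)
  define r where "r = max \<beta> (1 - al/2)"
  have r: "\<beta> \<le> r" "1 - al/2 \<le> r" "r < 1" "0 < r" using al beta by (auto simp: r_def)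
  define c where "c = al / r"
  have c: "0 < c" "r * c = al" using al r by (auto simp: c_def)
  have key0: "(r-1)*(r+2*al) \<ge> (-al/2)*(r + 2*al)"
    using r al by (intro mult_right_mono) auto
  have key1: "(-al/2)*(r + 2*al) \<ge> (-al/2)*(1+2*al)"
    using r al by (intro mult_left_mono_neg) auto
  have key: "r*r - (1-2*al)*r - al \<ge> 0"
  proof -
    have "r*r - (1-2*al)*r - al = (r-1)*(r+2*al) + al" by (simp add: algebra_simps)
    moreover have "al/2 - al*al \<ge> 0" proof -
      have "al*al \<le> al*(1/2)" using al by (intro mult_left_mono) auto
      thus ?thesis by simp
    qed
    ultimately show ?thesis using key0 key1 by (simp add: algebra_simps)
  qed
  have coef: "1 - 2*al + c \<le> r"
  proof -
    have "r * (1 - 2*al + c) \<le> r * r" using key c by (simp add: algebra_simps)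
    thus ?thesis using r by simp
  qed
  define V where "V n = a n + b n + c * a (n - 1)" for n
  have step: "V (n+1) \<le> r * V n" if "n \<ge> 1" for n
  proof -
    have "V (n+1) = a (n+1) + b (n+1) + c * a n" by (simp add: V_def)
    also have "\<dots> \<le> (1 - 2*al + c) * a n + al * a (n-1) + \<beta> * b n"
      using rec[OF al(1) al(2) that] by (simp add: algebra_simps)
    also have "\<dots> \<le> r * a n + (r*c) * a (n-1) + r * b n"
      using coef c r a_nonneg b_nonneg
      by (intro add_mono mult_right_mono) auto
    also have "\<dots> = r * V n" by (simp add: V_def algebra_simps)
    finally show ?thesis .
  qed
  have bound: "V (k+1) \<le> r ^ k * V 1" for k
  proof (induction k)
    case 0 then show ?case by simp
  next
    case (Suc k)
    have "V (Suc k + 1) \<le> r * V (k+1)" using step[of "k+1"] by simp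
    also have "\<dots> \<le> r * (r^k * V 1)" using Suc r by (intro mult_left_mono) auto
    finally show ?case by (simp add: algebra_simps)
  qed
  have V1: "V 1 \<ge> 0" using a_nonneg b_nonneg c by (simp add: V_def)
  define M where "M = V 1 / r + 1"
  have "V 1 / r \<ge> 0" using V1 r(4) by (rule divide_nonneg_pos)
  hence "M > 0" unfolding M_def by linarith
  moreover have an: "a n \<le> r ^ n * M" if "n > 0" for n
  proof -
    obtain k where k: "n = k + 1" using \<open>n > 0\<close> by (metis Suc_diff_1 Suc_eq_plus1)
    have "a n \<le> V n" using a_nonneg b_nonneg c by (simp add: V_def)
    also have "\<dots> \<le> r ^ k * V 1" using bound k by simp
    also have "\<dots> = r ^ n * (V 1 / r)" using k r by simp
    also have "\<dots> \<le> r ^ n * M" using r by (intro mult_left_mono) (auto simp: M_def)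
    finally show ?thesis .
  qed
  ultimately show ?thesis using r(3,4) an by (intro exI[of _ r] exI[of _ M]) simp
qed

end
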